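(* The logic $\mathsf{CK}\oplus\mathsf{C}_\Diamond\oplus\mathsf{I}_{\Diamond\Box}$ is a conservative extension of $\mathsf{CK}_\Box$: a $\Diamond$-free formula is derivable in $\mathsf{CK}\oplus\mathsf{C}_\Diamond\oplus\mathsf{I}_{\Diamond\Box}$ if and only if it is a theorem of $\mathsf{CK}_\Box$.
   Context: Formulas: $\mathbf{L}$ is generated from a countably infinite set of propositional variables by $\varphi ::= p \mid \bot \mid \varphi\wedge\varphi \mid \varphi\vee\varphi \mid \varphi\to\varphi \mid \Box\varphi \mid \Diamond\varphi$; $\neg\varphi:=\varphi\to\bot$. Axioms: $\mathsf{K}_\Box$: $\Box(\varphi\to\psi)\to(\Box\varphi\to\Box\psi)$; $\mathsf{K}_\Diamond$: $\Box(\varphi\to\psi)\to(\Diamond\varphi\to\Diamond\psi)$; $\mathsf{C}_\Diamond$: $\Diamond(\varphi\vee\psi)\to\Diamond\varphi\vee\Diamond\psi$; $\mathsf{I}_{\Diamond\Box}$: $(\Diamond\varphi\to\Box\psi)\to\Box(\varphi\to\psi)$. For a set $\mathsf{Ax}$ of axioms, $\mathsf{CK}\oplus\mathsf{Ax}$ is the relation $\Gamma\vdash_{\mathsf{Ax}}\varphi$ inductively generated by: (Ax) $\Gamma\vdash\varphi$ whenever $\varphi$ is a substitution instance of an axiom of a standard Hilbert axiomatisation of intuitionistic propositional logic, of $\mathsf{K}_\Box$, of $\mathsf{K}_\Diamond$, or of an element of $\mathsf{Ax}$; (El) $\Gamma\vdash\varphi$ if $\varphi\in\Gamma$; (MP)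 from $\Gamma\vdash\varphi$ and $\Gamma\vdash\varphi\to\psi$ infer $\Gamma\vdash\psi$; (Nec) from $\emptyset\vdash\varphi$ infer $\Gamma\vdash\Box\varphi$. A formula is derivable if $\emptyset\vdash_{\mathsf{Ax}}\varphi$. $\mathsf{CK}_\Box$ is the logic on $\Diamond$-free formulas axiomatised by intuitionistic propositional logic plus $\mathsf{K}_\Box$, closed under modus ponens and necessitation (from $\varphi$ infer $\Box\varphi$). A logic is a conservative extension of $\mathsf{CK}_\Box$ if its derivable $\Diamond$-free formulas are exactly the theorems of $\mathsf{CK}_\Box$. *)

theory Defs
  imports Main
begin

datatype form =
    Var nat
  | Bot
  | And form form
  | Or form form
  | Imp form form
  | Box form
  | Dia form

definition Neg :: "form \<Rightarrow> form" where
  "Neg \<phi> = Imp \<phi> Bot"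

fun dia_free :: "form \<Rightarrow> bool" where
  "dia_free (Var p) = True"
| "dia_free Bot = True"
| "dia_free (And a b) = (dia_free a \<and> dia_free b)"
| "dia_free (Or a b) = (dia_free a \<and> dia_free b)"
| "dia_free (Imp a b) = (dia_free a \<and> dia_free b)"
| "dia_free (Box a) = dia_free a"
| "dia_free (Dia a) = False"

inductive ipc_ax :: "form \<Rightarrow> bool" where
  ax1: "ipc_ax (Imp a (Imp b a))"
| ax2: "ipc_ax (Imp (Imp a (Imp b c)) (Imp (Imp a b) (Imp a c)))"
| ax3: "ipc_ax (Imp (And a b) a)"
| ax4: "ipc_ax (Imp (And a b) b)"
| ax5: "ipc_ax (Imp a (Imp b (And a b)))"
| ax6: "ipc_ax (Imp a (Or a b))"
| ax7: "ipc_ax (Imp b (Or a b))"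
| ax8: "ipc_ax (Imp (Imp a c) (Imp (Imp b c) (Imp (Or a b) c)))"
| ax9: "ipc_ax (Imp Bot a)"

definition K_box :: "form \<Rightarrow> bool" where
  "K_box \<phi> \<longleftrightarrow> (\<exists>a b. \<phi> = Imp (Box (Imp a b)) (Imp (Box a) (Box b)))"

definition K_dia :: "form \<Rightarrow> bool" where
  "K_dia \<phi> \<longleftrightarrow> (\<exists>a b. \<phi> = Imp (Box (Imp a b)) (Imp (Dia a) (Dia b)))"

definition C_dia :: "form \<Rightarrow> bool" where
  "C_dia \<phi> \<longleftrightarrow> (\<exists>a b. \<phi> = Imp (Dia (Or a b)) (Or (Dia a) (Dia b)))"

definition I_dia_box :: "form \<Rightarrow> bool" where
  "I_dia_box \<phi> \<longleftrightarrow> (\<exists>a b. \<phi> = Imp (Imp (Dia a) (Box b)) (Box (Imp a b)))"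

text \<open>The consequence relation of CK \<oplus> Ax, where the extra axioms are given as a
  predicate closed under substitution (schemata).\<close>
inductive CK_deriv :: "(form \<Rightarrow> bool) \<Rightarrow> form set \<Rightarrow> form \<Rightarrow> bool" for Ax where
  Ax_ipc: "ipc_ax \<phi> \<Longrightarrow> CK_deriv Ax \<Gamma> \<phi>"
| Ax_Kbox: "K_box \<phi> \<Longrightarrow> CK_deriv Ax \<Gamma> \<phi>"
| Ax_Kdia: "K_dia \<phi> \<Longrightarrow> CK_deriv Ax \<Gamma> \<phi>"
| Ax_extra: "Ax \<phi> \<Longrightarrow> CK_deriv Ax \<Gamma> \<phi>"
| El: "\<phi> \<in> \<Gamma> \<Longrightarrow> CK_deriv Ax \<Gamma> \<phi>"
| MP: "CK_deriv Ax \<Gamma> \<phi> \<Longrightarrow> CK_deriv Ax \<Gamma> (Imp \<phi> \<psi>) \<Longrightarrow> CK_deriv Ax \<Gamma> \<psi>"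
| Nec: "CK_deriv Ax {} \<phi> \<Longrightarrow> CK_deriv Ax \<Gamma> (Box \<phi>)"

inductive CK_box_thm :: "form \<Rightarrow> bool" where
  B_ipc: "ipc_ax \<phi> \<Longrightarrow> dia_free \<phi> \<Longrightarrow> CK_box_thm \<phi>"
| B_K: "K_box \<phi> \<Longrightarrow> dia_free \<phi> \<Longrightarrow> CK_box_thm \<phi>"
| B_MP: "CK_box_thm \<phi> \<Longrightarrow> CK_box_thm (Imp \<phi> \<psi>) \<Longrightarrow> CK_box_thm \<psi>"
| B_Nec: "CK_box_thm \<phi> \<Longrightarrow> CK_box_thm (Box \<phi>)"

end

theory Submission
  imports Defs
begin

definition T :: form where "T = Imp Bot Bot"

fun tr :: "form \<Rightarrow> form" where
  "tr (Var p) = Var p"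
| "tr Bot = Bot"
| "tr (And a b) = And (tr a) (tr b)"
| "tr (Or a b) = Or (tr a) (tr b)"
| "tr (Imp a b) = Imp (tr a) (tr b)"
| "tr (Box a) = Box (tr a)"
| "tr (Dia a) = T"

lemma tr_df: "dia_free (tr a)"
  by (induction a) (auto simp: T_def)

lemma tr_id: "dia_free a \<Longrightarrow> tr a = a"
  by (induction a) auto

lemma ipc: "ipc_ax \<phi> \<Longrightarrow> dia_free \<phi> \<Longrightarrow> CK_box_thm \<phi>"
  by (rule B_ipc)

lemma ipc_tr: "ipc_ax \<phi> \<Longrightarrow> ipc_ax (tr \<phi>)"
  by (induction rule: ipc_ax.induct) (auto intro: ipc_ax.intros)

lemma mp: "CK_box_thm a \<Longrightarrow> CK_box_thm (Imp a b) \<Longrightarrow> CK_box_thm b"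
  by (rule B_MP)

lemma idt: "dia_free A \<Longrightarrow> CK_box_thm (Imp A A)"
proof -
  assume d: "dia_free A"
  have 1: "CK_box_thm (Imp (Imp A (Imp (Imp A A) A)) (Imp (Imp A (Imp A A)) (Imp A A)))"
    using d by (intro ipc ipc_ax.intros) auto
  have 2: "CK_box_thm (Imp A (Imp (Imp A A) A))" using d by (intro ipc ipc_ax.intros) auto
  have 3: "CK_box_thm (Imp A (Imp A A))" using d by (intro ipc ipc_ax.intros) auto
  show ?thesis using mp[OF 3 mp[OF 2 1]] .
qed

lemma syl: "dia_free A \<Longrightarrow> dia_free B \<Longrightarrow> dia_free C \<Longrightarrow> CK_box_thm (Imp A B) \<Longrightarrow>
   CK_box_thm (Imp B C) \<Longrightarrow> CK_box_thm (Imp A C)"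
proof -
  assume d: "dia_free A" "dia_free B" "dia_free C" and ab: "CK_box_thm (Imp A B)"
    and bc: "CK_box_thm (Imp B C)"
  have 1: "CK_box_thm (Imp (Imp B C) (Imp A (Imp B C)))" using d by (intro ipc ipc_ax.intros) auto
  have 2: "CK_box_thm (Imp (Imp A (Imp B C)) (Imp (Imp A B) (Imp A C)))"
    using d by (intro ipc ipc_ax.intros) auto
  show ?thesis using mp[OF ab mp[OF mp[OF bc 1] 2]] .
qed

lemma Tthm: "CK_box_thm T"
  unfolding T_def by (intro ipc ipc_ax.intros) auto

lemma Ithm: "dia_free a \<Longrightarrow> dia_free b \<Longrightarrow> CK_box_thm (Imp (Imp T (Box b)) (Box (Imp a b)))"
proof -
  assume d: "dia_free a" "dia_free b"
  have dT: "dia_free T" by (simp add: T_def)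
  have 1: "CK_box_thm (Imp b (Imp a b))" using d by (intro ipc ipc_ax.intros) auto
  have 2: "CK_box_thm (Imp (Box (Imp b (Imp a b))) (Imp (Box b) (Box (Imp a b))))"
    using d by (intro B_K) (auto simp: K_box_def)
  have X: "CK_box_thm (Imp (Box b) (Box (Imp a b)))" using mp[OF B_Nec[OF 1] 2] .
  let ?B = "Box b"
  have 3: "CK_box_thm (Imp (Imp (Imp T ?B) (Imp T ?B)) (Imp (Imp (Imp T ?B) T) (Imp (Imp T ?B) ?B)))"
    using d dT by (intro ipc ipc_ax.intros) auto
  have 4: "CK_box_thm (Imp (Imp T ?B) (Imp T ?B))" using d dT by (intro idt) auto
  have f5: "CK_box_thm (Imp T (Imp (Imp T ?B) T))"
    using d dT by (intro ipc ipc_ax.intros) auto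
  have 5: "CK_box_thm (Imp (Imp T ?B) T)" using mp[OF Tthm f5] .
  have Y: "CK_box_thm (Imp (Imp T ?B) ?B)" using mp[OF 5 mp[OF 4 3]] .
  show ?thesis using d dT by (intro syl[OF _ _ _ Y X]) auto
qed

lemma sound:
  "CK_deriv (\<lambda>\<psi>. C_dia \<psi> \<or> I_dia_box \<psi>) \<Gamma> \<phi> \<Longrightarrow> \<Gamma> = {} \<Longrightarrow> CK_box_thm (tr \<phi>)"
proof (induction rule: CK_deriv.induct)
  case (Ax_ipc \<phi> \<Gamma>)
  then show ?case using ipc_tr tr_df B_ipc by blast
next
  case (Ax_Kbox \<phi> \<Gamma>)
  then show ?case using tr_df by (auto simp: K_box_def intro!: B_K)
next
  case (Ax_Kdia \<phi> \<Gamma>)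
  then obtain a b where e: "\<phi> = Imp (Box (Imp a b)) (Imp (Dia a) (Dia b))" by (auto simp: K_dia_def)
  have 1: "CK_box_thm (Imp (Imp T T) (Imp (Box (Imp (tr a) (tr b))) (Imp T T)))"
    using tr_df by (intro ipc ipc_ax.intros) (auto simp: T_def)
  have 2: "CK_box_thm (Imp T T)" by (rule idt) (simp add: T_def)
  show ?case using mp[OF 2 1] e by simp
next
  case (Ax_extra \<phi> \<Gamma>)
  from Ax_extra(1) show ?case
  proof
    assume "C_dia \<phi>"
    then obtain a b where e: "\<phi> = Imp (Dia (Or a b)) (Or (Dia a) (Dia b))" by (auto simp: C_dia_def)
    have "CK_box_thm (Imp T (Or T T))" by (intro ipc ipc_ax.intros) (auto simp: T_def)
    then show ?case using e by simp
  next
    assume "I_dia_box \<phi>"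
    then obtain a b where e: "\<phi> = Imp (Imp (Dia a) (Box b)) (Box (Imp a b))" by (auto simp: I_dia_box_def)
    show ?case using e Ithm[OF tr_df tr_df] by simp
  qed
next
  case (El \<phi> \<Gamma>)
  then show ?case by simp
next
  case (MP \<Gamma> \<phi> \<psi>)
  then have "CK_box_thm (tr \<phi>)" "CK_box_thm (Imp (tr \<phi>) (tr \<psi>))" by simp_all
  then show ?case by (rule B_MP)
next
  case (Nec \<phi> \<Gamma>)
  then show ?case by (simp add: B_Nec)
qed

lemma complete: "CK_box_thm \<phi> \<Longrightarrow> CK_deriv Ax {} \<phi>"
proof (induction rule: CK_box_thm.induct)
  case (B_MP \<phi> \<psi>)
  then show ?case by (blast intro: CK_deriv.MP)
qed (auto intro: CK_deriv.Ax_ipc CK_deriv.Ax_Kbox CK_deriv.Nec)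

theorem mainTheorem11:
  assumes "dia_free \<phi>"
  shows "CK_deriv (\<lambda>\<psi>. C_dia \<psi> \<or> I_dia_box \<psi>) {} \<phi> \<longleftrightarrow> CK_box_thm \<phi>"
  using sound[of "{}" \<phi>] complete tr_id[OF assms] by metis

end
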